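(* Let $C$ be a coalgebra over a field $k$ and let $\sigma:C\otimes C\to k$ be a strong $\mathcal{D}$-map, i.e. a $k$-bilinear map with $\sum\sigma(c_{(1)}\otimes d)c_{(2)}=\sum\sigma(c_{(2)}\otimes d)c_{(1)}$ for all $c,d\in C$. Let $(M,\rho)$ be a right $C$-comodule. Then the map $$R_\sigma:M\otimes M\to M\otimes M,\qquad R_\sigma(m\otimes n)=\sum\sigma(m_{<1>}\otimes n_{<1>})\,m_{<0>}\otimes n_{<0>}$$ is a solution of the Long equation, i.e. $R_\sigma^{12}R_\sigma^{13}=R_\sigma^{13}R_\sigma^{12}$ and $R_\sigma^{12}R_\sigma^{23}=R_\sigma^{23}R_\sigma^{12}$ in $\mathrm{End}_k(M\otimes M\otimes M)$.
   Context: Sweedler notation: $\Delta(c)=\sum c_{(1)}\otimes c_{(2)}$ and $\rho(m)=\sum m_{<0>}\otimes m_{<1>}$. For $R\in\mathrm{End}_k(M\otimes M)$: $R^{12}=R\otimes I$, $R^{23}=I\otimes R$, $R^{13}=(I\otimes\tau)(R\otimes I)(I\otimes\tau)$, where $\tau(m\otimes n)=n\otimes m$. *)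

theory Defs
  imports "HOL-Library.Poly_Mapping"
begin

text \<open>Vector spaces over a field 'k are modelled as free vector spaces
  (finitely supported 'k-valued functions) on a basis 'b (every vector space has a basis).
  The tensor product of spaces with bases 'a, 'b is the free space on 'a \<times> 'b.
  A linear map is given by its values on basis vectors and extended linearly.\<close>

definition smul :: "'k::comm_ring_1 \<Rightarrow> ('b \<Rightarrow>\<^sub>0 'k) \<Rightarrow> ('b \<Rightarrow>\<^sub>0 'k)" where
  "smul s v = Poly_Mapping.map (\<lambda>y. s * y) v"

definition lin :: "('a \<Rightarrow> ('b \<Rightarrow>\<^sub>0 'k::comm_ring_1)) \<Rightarrow> ('a \<Rightarrow>\<^sub>0 'k) \<Rightarrow> ('b \<Rightarrow>\<^sub>0 'k)" where
  "lin f v = (\<Sum>a\<in>Poly_Mapping.keys v. smul (Poly_Mapping.lookup v a) (f a))"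

definition bv :: "'a \<Rightarrow> ('a \<Rightarrow>\<^sub>0 'k::comm_ring_1)" where
  "bv a = Poly_Mapping.single a 1"

definition tprod :: "('a \<Rightarrow>\<^sub>0 'k::comm_ring_1) \<Rightarrow> ('b \<Rightarrow>\<^sub>0 'k) \<Rightarrow> ('a \<times> 'b \<Rightarrow>\<^sub>0 'k)" where
  "tprod u v = (\<Sum>x\<in>Poly_Mapping.keys u. \<Sum>y\<in>Poly_Mapping.keys v. Poly_Mapping.single (x, y) (Poly_Mapping.lookup u x * Poly_Mapping.lookup v y))"

definition tmap :: "('a \<Rightarrow> ('c \<Rightarrow>\<^sub>0 'k::comm_ring_1)) \<Rightarrow> ('b \<Rightarrow> ('d \<Rightarrow>\<^sub>0 'k)) \<Rightarrow> ('a \<times> 'b \<Rightarrow> ('c \<times> 'd \<Rightarrow>\<^sub>0 'k))" where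
  "tmap f g = (\<lambda>(a, b). tprod (f a) (g b))"

definition relabel :: "('a \<Rightarrow> 'b) \<Rightarrow> ('a \<Rightarrow>\<^sub>0 'k::comm_ring_1) \<Rightarrow> ('b \<Rightarrow>\<^sub>0 'k)" where
  "relabel h v = lin (\<lambda>x. bv (h x)) v"

definition assoc3 :: "('a \<times> 'b) \<times> 'c \<Rightarrow> 'a \<times> 'b \<times> 'c" where
  "assoc3 = (\<lambda>((a, b), c). (a, b, c))"

definition coalgebra :: "('c \<Rightarrow> ('c \<times> 'c \<Rightarrow>\<^sub>0 'k::field)) \<Rightarrow> ('c \<Rightarrow> 'k) \<Rightarrow> bool" where
  "coalgebra \<Delta> \<epsilon> \<longleftrightarrow>
     (\<forall>c. relabel assoc3 (lin (tmap \<Delta> bv) (\<Delta> c)) = lin (tmap bv \<Delta>) (\<Delta> c)) \<and>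
     (\<forall>c. lin (\<lambda>(a, b). smul (\<epsilon> a) (bv b)) (\<Delta> c) = bv c) \<and>
     (\<forall>c. lin (\<lambda>(a, b). smul (\<epsilon> b) (bv a)) (\<Delta> c) = bv c)"

definition right_comodule :: "('c \<Rightarrow> ('c \<times> 'c \<Rightarrow>\<^sub>0 'k::field)) \<Rightarrow> ('c \<Rightarrow> 'k)
    \<Rightarrow> ('m \<Rightarrow> ('m \<times> 'c \<Rightarrow>\<^sub>0 'k)) \<Rightarrow> bool" where
  "right_comodule \<Delta> \<epsilon> \<rho> \<longleftrightarrow>
     (\<forall>m. relabel assoc3 (lin (tmap \<rho> bv) (\<rho> m)) = lin (tmap bv \<Delta>) (\<rho> m)) \<and>
     (\<forall>m. lin (\<lambda>(x, a). smul (\<epsilon> a) (bv x)) (\<rho> m) = bv m)"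

text \<open>A bilinear map \<sigma> : C \<otimes> C \<rightarrow> k is determined by its values \<sigma> a b on pairs
  of basis vectors. Strong D-map condition
  \<Sum> \<sigma>(c(1) \<otimes> d) c(2) = \<Sum> \<sigma>(c(2) \<otimes> d) c(1); by bilinearity it suffices
  (and is equivalent) to require it for basis vectors c, d.\<close>
definition strong_D_map :: "('c \<Rightarrow> ('c \<times> 'c \<Rightarrow>\<^sub>0 'k::field)) \<Rightarrow> ('c \<Rightarrow> 'c \<Rightarrow> 'k) \<Rightarrow> bool" where
  "strong_D_map \<Delta> \<sigma> \<longleftrightarrow>
     (\<forall>c d. lin (\<lambda>(a, b). smul (\<sigma> a d) (bv b)) (\<Delta> c) =
            lin (\<lambda>(a, b). smul (\<sigma> b d) (bv a)) (\<Delta> c))"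

definition R_sigma :: "('m \<Rightarrow> ('m \<times> 'c \<Rightarrow>\<^sub>0 'k::field)) \<Rightarrow> ('c \<Rightarrow> 'c \<Rightarrow> 'k)
    \<Rightarrow> 'm \<times> 'm \<Rightarrow> ('m \<times> 'm \<Rightarrow>\<^sub>0 'k)" where
  "R_sigma \<rho> \<sigma> = (\<lambda>(m, n).
      lin (\<lambda>((x, a), (y, b)). smul (\<sigma> a b) (bv (x, y))) (tprod (\<rho> m) (\<rho> n)))"

definition R12 :: "('m \<times> 'm \<Rightarrow> ('m \<times> 'm \<Rightarrow>\<^sub>0 'k::comm_ring_1)) \<Rightarrow> 'm \<times> 'm \<times> 'm \<Rightarrow> ('m \<times> 'm \<times> 'm \<Rightarrow>\<^sub>0 'k)" where
  "R12 R = (\<lambda>(m, n, p). relabel (\<lambda>(x, y). (x, y, p)) (R (m, n)))"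

definition R23 :: "('m \<times> 'm \<Rightarrow> ('m \<times> 'm \<Rightarrow>\<^sub>0 'k::comm_ring_1)) \<Rightarrow> 'm \<times> 'm \<times> 'm \<Rightarrow> ('m \<times> 'm \<times> 'm \<Rightarrow>\<^sub>0 'k)" where
  "R23 R = (\<lambda>(m, n, p). relabel (\<lambda>(y, z). (m, y, z)) (R (n, p)))"

definition R13 :: "('m \<times> 'm \<Rightarrow> ('m \<times> 'm \<Rightarrow>\<^sub>0 'k::comm_ring_1)) \<Rightarrow> 'm \<times> 'm \<times> 'm \<Rightarrow> ('m \<times> 'm \<times> 'm \<Rightarrow>\<^sub>0 'k)" where
  "R13 R = (\<lambda>(m, n, p). relabel (\<lambda>(x, z). (x, n, z)) (R (m, p)))"

text \<open>Composition F G (apply G first) of linear maps given on basis vectors.\<close>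
definition lcomp :: "('b \<Rightarrow> ('c \<Rightarrow>\<^sub>0 'k::comm_ring_1)) \<Rightarrow> ('a \<Rightarrow> ('b \<Rightarrow>\<^sub>0 'k)) \<Rightarrow> ('a \<Rightarrow> ('c \<Rightarrow>\<^sub>0 'k))" where
  "lcomp F G = (\<lambda>e. lin F (G e))"

text \<open>Long equation: R^12 R^13 = R^13 R^12 and R^12 R^23 = R^23 R^12
  (linear maps are equal iff they agree on basis vectors).\<close>
definition long_equation :: "('m \<times> 'm \<Rightarrow> ('m \<times> 'm \<Rightarrow>\<^sub>0 'k::comm_ring_1)) \<Rightarrow> bool" where
  "long_equation R \<longleftrightarrow>
     lcomp (R12 R) (R13 R) = lcomp (R13 R) (R12 R) \<and>
     lcomp (R12 R) (R23 R) = lcomp (R23 R) (R12 R)"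

end

theory Submission
  imports Defs
begin

lemma lookup_smul[simp]: "Poly_Mapping.lookup (smul c v) x = c * Poly_Mapping.lookup v x"
  unfolding smul_def by (simp add: map.rep_eq when_def)

lemma smul_0[simp]: "smul (0::'k::comm_ring_1) v = 0"
  by (rule poly_mapping_eqI) simp

lemma smul_zero[simp]: "smul c (0::'a \<Rightarrow>\<^sub>0 'k::comm_ring_1) = 0"
  by (rule poly_mapping_eqI) simp

lemma lookup_lin: "Poly_Mapping.lookup (lin f v) x = (\<Sum>a\<in>Poly_Mapping.keys v. Poly_Mapping.lookup v a * Poly_Mapping.lookup (f a) x)"
  unfolding lin_def by (simp add: lookup_sum)

lemma lookup_lin_super: "finite S \<Longrightarrow> Poly_Mapping.keys v \<subseteq> S \<Longrightarrow>
   Poly_Mapping.lookup (lin f v) x = (\<Sum>a\<in>S. Poly_Mapping.lookup v a * Poly_Mapping.lookup (f a) x)"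
  unfolding lookup_lin
  by (rule sum.mono_neutral_left) (auto simp: in_keys_iff)

lemma lin_add: "lin f (u + v) = lin f u + lin f v"
proof (rule poly_mapping_eqI)
  fix x
  let ?S = "Poly_Mapping.keys u \<union> Poly_Mapping.keys v"
  have "Poly_Mapping.keys (u+v) \<subseteq> ?S" by (simp add: keys_add)
  then show "Poly_Mapping.lookup (lin f (u + v)) x = Poly_Mapping.lookup (lin f u + lin f v) x"
    by (simp add: lookup_lin_super[of ?S] lookup_add distrib_right sum.distrib)
qed

lemma lin_smul: "lin f (smul c v) = smul c (lin f v)"
proof (rule poly_mapping_eqI)
  fix x
  have "Poly_Mapping.keys (smul c v) \<subseteq> Poly_Mapping.keys v" by (auto simp: in_keys_iff)
  then show "Poly_Mapping.lookup (lin f (smul c v)) x = Poly_Mapping.lookup (smul c (lin f v)) x"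
    by (simp add: lookup_lin_super[of "Poly_Mapping.keys v"] sum_distrib_left mult.assoc)
qed

lemma lin_zero[simp]: "lin f 0 = 0"
  unfolding lin_def by simp

lemma lin_sum: "lin f (\<Sum>i\<in>I. g i) = (\<Sum>i\<in>I. lin f (g i))"
  by (induction I rule: infinite_finite_induct) (auto simp: lin_add)

lemma lin_single: "lin f (Poly_Mapping.single a c) = smul c (f a)"
  by (rule poly_mapping_eqI) (simp add: lookup_lin_super[of "{a}"] lookup_single)

lemma lin_bv[simp]: "lin f (bv a) = f a"
  unfolding bv_def lin_single by (rule poly_mapping_eqI) simp

lemma lin_fun_add: "lin (\<lambda>a. f a + g a) v = lin f v + lin g v"
  by (rule poly_mapping_eqI) (simp add: lookup_lin lookup_add distrib_left sum.distrib)

lemma lin_fun_smul: "lin (\<lambda>a. smul c (f a)) v = smul c (lin f v)"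
  by (rule poly_mapping_eqI) (simp add: lookup_lin sum_distrib_left mult.left_commute)

lemma lin_lin: "lin f (lin g v) = lin (\<lambda>a. lin f (g a)) v"
  unfolding lin_def[of g v] lin_sum lin_smul by (simp add: lin_def[of "\<lambda>a. lin f (g a)"])

lemma lin_cong: "(\<And>a. a \<in> Poly_Mapping.keys v \<Longrightarrow> f a = g a) \<Longrightarrow> lin f v = lin g v"
  unfolding lin_def by simp

lemma lin_swap: "lin (\<lambda>x. lin (\<lambda>y. F x y) v) u = lin (\<lambda>y. lin (\<lambda>x. F x y) u) v"
  apply (rule poly_mapping_eqI)
  apply (simp add: lookup_lin sum_distrib_left mult.left_commute)
  by (rule sum.swap)

lemma lin_bv_id[simp]: "lin bv v = v"
proof (rule poly_mapping_eqI)
  fix k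
  have "Poly_Mapping.lookup (lin bv v) k = (\<Sum>a\<in>Poly_Mapping.keys v. if a = k then Poly_Mapping.lookup v a else 0)"
    by (simp add: lookup_lin bv_def lookup_single when_def if_distrib cong: if_cong)
  also have "\<dots> = Poly_Mapping.lookup v k" by (simp add: in_keys_iff)
  finally show "Poly_Mapping.lookup (lin bv v) k = Poly_Mapping.lookup v k" .
qed

lemma tprod_lin: "tprod u v = lin (\<lambda>x. lin (\<lambda>y. bv (x,y)) v) u"
  apply (rule poly_mapping_eqI)
  apply (simp add: tprod_def lookup_lin lookup_sum bv_def lookup_single sum_distrib_left when_def)
  apply (intro sum.cong refl) apply auto done


lemma smul_smul[simp]: "smul c (smul d w) = smul (c * d) w"
  by (rule poly_mapping_eqI) (simp add: mult.assoc)

lemma lin_ext: "(\<And>x. f x = g x) \<Longrightarrow> lin f v = lin g v"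
  by (rule lin_cong) simp

lemma R_eq: "R_sigma \<rho> \<sigma> (m, n) =
  lin (\<lambda>xa. lin (\<lambda>yb. smul (\<sigma> (snd xa) (snd yb)) (bv (fst xa, fst yb))) (\<rho> n)) (\<rho> m)"
  unfolding R_sigma_def by (simp add: tprod_lin lin_lin split_beta)

lemma R12_eq: "R12 (R_sigma \<rho> \<sigma>) (m, n, p) =
  lin (\<lambda>xa. lin (\<lambda>yb. smul (\<sigma> (snd xa) (snd yb)) (bv (fst xa, fst yb, p))) (\<rho> n)) (\<rho> m)"
  unfolding R12_def relabel_def by (simp add: R_eq lin_lin lin_smul split_beta)

lemma R13_eq: "R13 (R_sigma \<rho> \<sigma>) (m, n, p) =
  lin (\<lambda>xa. lin (\<lambda>zb. smul (\<sigma> (snd xa) (snd zb)) (bv (fst xa, n, fst zb))) (\<rho> p)) (\<rho> m)"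
  unfolding R13_def relabel_def by (simp add: R_eq lin_lin lin_smul split_beta)

lemma R23_eq: "R23 (R_sigma \<rho> \<sigma>) (m, n, p) =
  lin (\<lambda>yb. lin (\<lambda>zc. smul (\<sigma> (snd yb) (snd zc)) (bv (m, fst yb, fst zc))) (\<rho> p)) (\<rho> n)"
  unfolding R23_def relabel_def by (simp add: R_eq lin_lin lin_smul split_beta)

lemma CO:
  assumes "right_comodule \<Delta> \<epsilon> \<rho>"
  shows "lin (\<lambda>xa. lin (\<lambda>xa'. G (fst xa') (snd xa') (snd xa)) (\<rho> (fst xa))) (\<rho> m) =
         lin (\<lambda>xc. lin (\<lambda>aa. G (fst xc) (fst aa) (snd aa)) (\<Delta> (snd xc))) (\<rho> m)"
proof -
  define H where "H = (\<lambda>t. G (fst t) (fst (snd t)) (snd (snd t)))"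
  have "lin H (relabel assoc3 (lin (tmap \<rho> bv) (\<rho> m))) = lin H (lin (tmap bv \<Delta>) (\<rho> m))"
    using assms unfolding right_comodule_def by simp
  then show ?thesis
    by (simp add: H_def relabel_def lin_lin tmap_def tprod_lin assoc3_def split_beta)
qed

lemma Dgen:
  assumes "strong_D_map \<Delta> \<sigma>"
  shows "lin (\<lambda>aa. smul (\<sigma> (fst aa) d * \<phi> (snd aa)) w) (\<Delta> c) =
         lin (\<lambda>aa. smul (\<sigma> (snd aa) d * \<phi> (fst aa)) w) (\<Delta> c)"
proof -
  have "lin (\<lambda>b. smul (\<phi> b) w) (lin (\<lambda>(a, b). smul (\<sigma> a d) (bv b)) (\<Delta> c)) =
        lin (\<lambda>b. smul (\<phi> b) w) (lin (\<lambda>(a, b). smul (\<sigma> b d) (bv a)) (\<Delta> c))"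
    using assms unfolding strong_D_map_def by simp
  then show ?thesis by (simp add: lin_lin lin_smul split_beta)
qed

lemma Dlem:
  assumes "strong_D_map \<Delta> \<sigma>"
  shows "lin (\<lambda>aa. smul (\<sigma> (fst aa) d * \<sigma> (snd aa) e) w) (\<Delta> c) =
         lin (\<lambda>aa. smul (\<sigma> (snd aa) d * \<sigma> (fst aa) e) w) (\<Delta> c)"
  by (rule Dgen[OF assms, of d "\<lambda>b. \<sigma> b e", simplified])

lemma Dlem2:
  assumes "strong_D_map \<Delta> \<sigma>"
  shows "lin (\<lambda>aa. smul (\<sigma> (fst aa) d * \<sigma> e (snd aa)) w) (\<Delta> c) =
         lin (\<lambda>aa. smul (\<sigma> (snd aa) d * \<sigma> e (fst aa)) w) (\<Delta> c)"
  by (rule Dgen[OF assms, of d "\<lambda>b. \<sigma> e b", simplified])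

lemma eq1:
  assumes co: "right_comodule \<Delta> \<epsilon> \<rho>" and D: "strong_D_map \<Delta> \<sigma>"
  shows "lin (R12 (R_sigma \<rho> \<sigma>)) (R13 (R_sigma \<rho> \<sigma>) (m, n, p)) =
         lin (R13 (R_sigma \<rho> \<sigma>)) (R12 (R_sigma \<rho> \<sigma>) (m, n, p))"
proof -
  let ?F = "\<lambda>xc aa zb yb. smul (\<sigma> (snd aa) (snd zb) * \<sigma> (fst aa) (snd yb)) (bv (fst xc, fst yb, fst zb))"
  have "lin (R12 (R_sigma \<rho> \<sigma>)) (R13 (R_sigma \<rho> \<sigma>) (m, n, p)) =
    lin (\<lambda>xa. lin (\<lambda>zb. lin (\<lambda>xa'. lin (\<lambda>yb. smul (\<sigma> (snd xa) (snd zb) * \<sigma> (snd xa') (snd yb))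
       (bv (fst xa', fst yb, fst zb))) (\<rho> n)) (\<rho> (fst xa))) (\<rho> p)) (\<rho> m)"
    by (simp add: R13_eq R12_eq lin_lin lin_smul lin_fun_smul[symmetric])
  also have "\<dots> = lin (\<lambda>xa. lin (\<lambda>xa'. lin (\<lambda>zb. lin (\<lambda>yb. smul (\<sigma> (snd xa) (snd zb) * \<sigma> (snd xa') (snd yb))
       (bv (fst xa', fst yb, fst zb))) (\<rho> n)) (\<rho> p)) (\<rho> (fst xa))) (\<rho> m)"
    by (rule lin_ext, rule lin_swap)
  also have "\<dots> = lin (\<lambda>xc. lin (\<lambda>aa. lin (\<lambda>zb. lin (\<lambda>yb. ?F xc aa zb yb) (\<rho> n)) (\<rho> p)) (\<Delta> (snd xc))) (\<rho> m)"
    by (rule CO[OF co])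
  also have "\<dots> = lin (\<lambda>xc. lin (\<lambda>zb. lin (\<lambda>aa. lin (\<lambda>yb. ?F xc aa zb yb) (\<rho> n)) (\<Delta> (snd xc))) (\<rho> p)) (\<rho> m)"
    by (rule lin_ext, rule lin_swap)
  also have "\<dots> = lin (\<lambda>xc. lin (\<lambda>zb. lin (\<lambda>yb. lin (\<lambda>aa. ?F xc aa zb yb) (\<Delta> (snd xc))) (\<rho> n)) (\<rho> p)) (\<rho> m)"
    by (rule lin_ext, rule lin_ext, rule lin_swap)
  also have "\<dots> = lin (\<lambda>xc. lin (\<lambda>zb. lin (\<lambda>yb. lin (\<lambda>aa. smul (\<sigma> (fst aa) (snd zb) * \<sigma> (snd aa) (snd yb)) (bv (fst xc, fst yb, fst zb))) (\<Delta> (snd xc))) (\<rho> n)) (\<rho> p)) (\<rho> m)"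
    by (rule lin_ext, rule lin_ext, rule lin_ext, rule Dlem[OF D, symmetric])
  finally have L: "lin (R12 (R_sigma \<rho> \<sigma>)) (R13 (R_sigma \<rho> \<sigma>) (m, n, p)) = \<dots>" .
  let ?G = "\<lambda>xc aa yb zb. smul (\<sigma> (snd aa) (snd yb) * \<sigma> (fst aa) (snd zb)) (bv (fst xc, fst yb, fst zb))"
  have "lin (R13 (R_sigma \<rho> \<sigma>)) (R12 (R_sigma \<rho> \<sigma>) (m, n, p)) =
    lin (\<lambda>xa. lin (\<lambda>yb. lin (\<lambda>xa'. lin (\<lambda>zb. smul (\<sigma> (snd xa) (snd yb) * \<sigma> (snd xa') (snd zb))
       (bv (fst xa', fst yb, fst zb))) (\<rho> p)) (\<rho> (fst xa))) (\<rho> n)) (\<rho> m)"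
    by (simp add: R13_eq R12_eq lin_lin lin_smul lin_fun_smul[symmetric])
  also have "\<dots> = lin (\<lambda>xa. lin (\<lambda>xa'. lin (\<lambda>yb. lin (\<lambda>zb. smul (\<sigma> (snd xa) (snd yb) * \<sigma> (snd xa') (snd zb))
       (bv (fst xa', fst yb, fst zb))) (\<rho> p)) (\<rho> n)) (\<rho> (fst xa))) (\<rho> m)"
    by (rule lin_ext, rule lin_swap)
  also have "\<dots> = lin (\<lambda>xc. lin (\<lambda>aa. lin (\<lambda>yb. lin (\<lambda>zb. ?G xc aa yb zb) (\<rho> p)) (\<rho> n)) (\<Delta> (snd xc))) (\<rho> m)"
    by (rule CO[OF co])
  also have "\<dots> = lin (\<lambda>xc. lin (\<lambda>yb. lin (\<lambda>aa. lin (\<lambda>zb. ?G xc aa yb zb) (\<rho> p)) (\<Delta> (snd xc))) (\<rho> n)) (\<rho> m)"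
    by (rule lin_ext, rule lin_swap)
  also have "\<dots> = lin (\<lambda>xc. lin (\<lambda>yb. lin (\<lambda>zb. lin (\<lambda>aa. ?G xc aa yb zb) (\<Delta> (snd xc))) (\<rho> p)) (\<rho> n)) (\<rho> m)"
    by (rule lin_ext, rule lin_ext, rule lin_swap)
  also have "\<dots> = lin (\<lambda>xc. lin (\<lambda>zb. lin (\<lambda>yb. lin (\<lambda>aa. ?G xc aa yb zb) (\<Delta> (snd xc))) (\<rho> n)) (\<rho> p)) (\<rho> m)"
    by (rule lin_ext, rule lin_swap)
  finally show ?thesis using L by (simp add: mult.commute)
qed

lemma eq2:
  assumes co: "right_comodule \<Delta> \<epsilon> \<rho>" and D: "strong_D_map \<Delta> \<sigma>"
  shows "lin (R12 (R_sigma \<rho> \<sigma>)) (R23 (R_sigma \<rho> \<sigma>) (m, n, p)) =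
         lin (R23 (R_sigma \<rho> \<sigma>)) (R12 (R_sigma \<rho> \<sigma>) (m, n, p))"
proof -
  let ?F = "\<lambda>yc xa aa zb. smul (\<sigma> (snd aa) (snd zb) * \<sigma> (snd xa) (fst aa)) (bv (fst xa, fst yc, fst zb))"
  have "lin (R12 (R_sigma \<rho> \<sigma>)) (R23 (R_sigma \<rho> \<sigma>) (m, n, p)) =
    lin (\<lambda>yb. lin (\<lambda>zc. lin (\<lambda>xa. lin (\<lambda>yb'. smul (\<sigma> (snd yb) (snd zc) * \<sigma> (snd xa) (snd yb'))
       (bv (fst xa, fst yb', fst zc))) (\<rho> (fst yb))) (\<rho> m)) (\<rho> p)) (\<rho> n)"
    by (simp add: R23_eq R12_eq lin_lin lin_smul lin_fun_smul[symmetric])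
  also have "\<dots> = lin (\<lambda>yb. lin (\<lambda>zc. lin (\<lambda>yb'. lin (\<lambda>xa. smul (\<sigma> (snd yb) (snd zc) * \<sigma> (snd xa) (snd yb'))
       (bv (fst xa, fst yb', fst zc))) (\<rho> m)) (\<rho> (fst yb))) (\<rho> p)) (\<rho> n)"
    by (rule lin_ext, rule lin_ext, rule lin_swap)
  also have "\<dots> = lin (\<lambda>yb. lin (\<lambda>yb'. lin (\<lambda>zc. lin (\<lambda>xa. smul (\<sigma> (snd yb) (snd zc) * \<sigma> (snd xa) (snd yb'))
       (bv (fst xa, fst yb', fst zc))) (\<rho> m)) (\<rho> p)) (\<rho> (fst yb))) (\<rho> n)"
    by (rule lin_ext, rule lin_swap)
  also have "\<dots> = lin (\<lambda>yc. lin (\<lambda>aa. lin (\<lambda>zb. lin (\<lambda>xa. ?F yc xa aa zb) (\<rho> m)) (\<rho> p)) (\<Delta> (snd yc))) (\<rho> n)"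
    by (rule CO[OF co])
  also have "\<dots> = lin (\<lambda>yc. lin (\<lambda>zb. lin (\<lambda>aa. lin (\<lambda>xa. ?F yc xa aa zb) (\<rho> m)) (\<Delta> (snd yc))) (\<rho> p)) (\<rho> n)"
    by (rule lin_ext, rule lin_swap)
  also have "\<dots> = lin (\<lambda>yc. lin (\<lambda>zb. lin (\<lambda>xa. lin (\<lambda>aa. ?F yc xa aa zb) (\<Delta> (snd yc))) (\<rho> m)) (\<rho> p)) (\<rho> n)"
    by (rule lin_ext, rule lin_ext, rule lin_swap)
  also have "\<dots> = lin (\<lambda>yc. lin (\<lambda>zb. lin (\<lambda>xa. lin (\<lambda>aa. smul (\<sigma> (fst aa) (snd zb) * \<sigma> (snd xa) (snd aa)) (bv (fst xa, fst yc, fst zb))) (\<Delta> (snd yc))) (\<rho> m)) (\<rho> p)) (\<rho> n)"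
    by (rule lin_ext, rule lin_ext, rule lin_ext, rule Dlem2[OF D, symmetric])
  finally have L: "lin (R12 (R_sigma \<rho> \<sigma>)) (R23 (R_sigma \<rho> \<sigma>) (m, n, p)) = \<dots>" .
  let ?G = "\<lambda>yc aa xa zb. smul (\<sigma> (snd xa) (snd aa) * \<sigma> (fst aa) (snd zb)) (bv (fst xa, fst yc, fst zb))"
  have "lin (R23 (R_sigma \<rho> \<sigma>)) (R12 (R_sigma \<rho> \<sigma>) (m, n, p)) =
    lin (\<lambda>xa. lin (\<lambda>yb. lin (\<lambda>yb'. lin (\<lambda>zc. smul (\<sigma> (snd xa) (snd yb) * \<sigma> (snd yb') (snd zc))
       (bv (fst xa, fst yb', fst zc))) (\<rho> p)) (\<rho> (fst yb))) (\<rho> n)) (\<rho> m)"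
    by (simp add: R23_eq R12_eq lin_lin lin_smul lin_fun_smul[symmetric])
  also have "\<dots> = lin (\<lambda>yb. lin (\<lambda>xa. lin (\<lambda>yb'. lin (\<lambda>zc. smul (\<sigma> (snd xa) (snd yb) * \<sigma> (snd yb') (snd zc))
       (bv (fst xa, fst yb', fst zc))) (\<rho> p)) (\<rho> (fst yb))) (\<rho> m)) (\<rho> n)"
    by (rule lin_swap)
  also have "\<dots> = lin (\<lambda>yb. lin (\<lambda>yb'. lin (\<lambda>xa. lin (\<lambda>zc. smul (\<sigma> (snd xa) (snd yb) * \<sigma> (snd yb') (snd zc))
       (bv (fst xa, fst yb', fst zc))) (\<rho> p)) (\<rho> m)) (\<rho> (fst yb))) (\<rho> n)"
    by (rule lin_ext, rule lin_swap)
  also have "\<dots> = lin (\<lambda>yc. lin (\<lambda>aa. lin (\<lambda>xa. lin (\<lambda>zb. ?G yc aa xa zb) (\<rho> p)) (\<rho> m)) (\<Delta> (snd yc))) (\<rho> n)"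
    by (rule CO[OF co])
  also have "\<dots> = lin (\<lambda>yc. lin (\<lambda>xa. lin (\<lambda>aa. lin (\<lambda>zb. ?G yc aa xa zb) (\<rho> p)) (\<Delta> (snd yc))) (\<rho> m)) (\<rho> n)"
    by (rule lin_ext, rule lin_swap)
  also have "\<dots> = lin (\<lambda>yc. lin (\<lambda>xa. lin (\<lambda>zb. lin (\<lambda>aa. ?G yc aa xa zb) (\<Delta> (snd yc))) (\<rho> p)) (\<rho> m)) (\<rho> n)"
    by (rule lin_ext, rule lin_ext, rule lin_swap)
  also have "\<dots> = lin (\<lambda>yc. lin (\<lambda>zb. lin (\<lambda>xa. lin (\<lambda>aa. ?G yc aa xa zb) (\<Delta> (snd yc))) (\<rho> m)) (\<rho> p)) (\<rho> n)"
    by (rule lin_ext, rule lin_swap)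
  finally show ?thesis using L by (simp add: mult.commute)
qed

theorem proposition4p2:
  fixes \<Delta> :: "'c \<Rightarrow> ('c \<times> 'c \<Rightarrow>\<^sub>0 'k::field)"
    and \<epsilon> :: "'c \<Rightarrow> 'k"
    and \<sigma> :: "'c \<Rightarrow> 'c \<Rightarrow> 'k"
    and \<rho> :: "'m \<Rightarrow> ('m \<times> 'c \<Rightarrow>\<^sub>0 'k)"
  assumes "coalgebra \<Delta> \<epsilon>"
    and "strong_D_map \<Delta> \<sigma>"
    and "right_comodule \<Delta> \<epsilon> \<rho>"
  shows "long_equation (R_sigma \<rho> \<sigma>)"
  unfolding long_equation_def lcomp_def
  using eq1[OF assms(3,2)] eq2[OF assms(3,2)] by auto

end
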